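(* Let $m,n\ge2$, $D\in\mathcal{D}$ and $j\in\{1,\dots,n\}$. If the $j$-th column of $D$ has at most $m-2$ nonzero entries, then $\{D,\mathrm{U}_j\}$ is not $\mathcal{I}$-maximized.
   Context: Channels from $\{1,\dots,m\}$ to $\{1,\dots,n\}$ are $m\times n$ row-stochastic matrices; $\mathcal{D}$ is the set of deterministic (0-1) channels, $\mathrm{rank}(D)$ the matrix rank; $\mathrm{U}_j\in\mathcal{D}$ is the deterministic channel whose $j$-th column is all ones. For a channel $W$, $\Lambda(W)=\{\lambda\text{ probability distribution on }\mathcal{D}: W=\sum_D\lambda_DD\}$, $C_{11}(\lambda)=\sum_D\lambda_D\log_2\mathrm{rank}(D)$, $\overline{C}_{11}(W)=\sup_{\lambda\in\Lambda(W)}C_{11}(\lambda)$. A subset $S\subseteq\mathcal{D}$ is $\mathcal{I}$-maximized if there is a probability distribution $\lambda$ on $\mathcal{D}$ with $\mathrm{supp}(\lambda)=S$ and $C_{11}(\lambda)=\overline{C}_{11}(W)$ where $W=\sum_D\lambda_DD$. *)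

theory Defs
  imports "HOL-Analysis.Analysis"
begin

text \<open>Channels from {1..m} to {1..n}: m x n real matrices (rows indexed by 'm,
columns by 'n), row-stochastic.\<close>

definition channel :: "real^'n^'m \<Rightarrow> bool" where
  "channel W \<longleftrightarrow> (\<forall>i j. W $ i $ j \<ge> 0) \<and> (\<forall>i. (\<Sum>j\<in>UNIV. W $ i $ j) = 1)"

definition det_channels :: "(real^'n^'m) set" where
  "det_channels = {D. channel D \<and> (\<forall>i j. D $ i $ j = 0 \<or> D $ i $ j = 1)}"

definition Uch :: "'n \<Rightarrow> real^'n^'m" where
  "Uch j = (\<chi> i k. if k = j then 1 else 0)"

definition prob_dist_det :: "(real^'n^'m \<Rightarrow> real) \<Rightarrow> bool" where
  "prob_dist_det lam \<longleftrightarrow> (\<forall>D. lam D \<ge> 0) \<and> (\<forall>D. D \<notin> det_channels \<longrightarrow> lam D = 0)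
     \<and> (\<Sum>D\<in>det_channels. lam D) = 1"

definition mix :: "(real^'n^'m \<Rightarrow> real) \<Rightarrow> real^'n^'m" where
  "mix lam = (\<Sum>D\<in>det_channels. lam D *\<^sub>R D)"

definition Lambda :: "real^'n^'m \<Rightarrow> (real^'n^'m \<Rightarrow> real) set" where
  "Lambda W = {lam. prob_dist_det lam \<and> W = mix lam}"

definition C11 :: "(real^'n^'m \<Rightarrow> real) \<Rightarrow> real" where
  "C11 lam = (\<Sum>D\<in>det_channels. lam D * log 2 (real (rank D)))"

definition C11bar :: "real^'n^'m \<Rightarrow> real" where
  "C11bar W = (SUP lam\<in>Lambda W. C11 lam)"

definition I_maximized :: "(real^'n^'m) set \<Rightarrow> bool" where
  "I_maximized S \<longleftrightarrow> (\<exists>lam. prob_dist_det lam \<and> {D. lam D \<noteq> 0} = S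
      \<and> C11 lam = C11bar (mix lam))"

end

theory Submission
  imports Defs
begin

lemma rows_eq: "rows (A::real^'n^'m) = range (\<lambda>i. A$i)"
  by (auto simp: rows_def row_def vec_lambda_eta)

lemma rank_row_change:
  fixes A B :: "real^'n^'m"
  assumes "\<forall>i. i \<noteq> i1 \<longrightarrow> A$i = B$i"
  shows "rank A \<le> rank B + 1"
proof -
  have "rows A \<subseteq> insert (A$i1) (rows B)"
    using assms by (auto simp: rows_eq)
  hence "dim (rows A) \<le> dim (insert (A$i1) (rows B))" by (rule dim_subset)
  also have "\<dots> \<le> dim (rows B) + 1" by (simp add: dim_insert)
  finally show ?thesis by (simp add: row_rank_def)
qed

lemma rank_ge2:
  fixes A :: "real^'n^'m"
  assumes "A$a = u" "A$b = v" "u$j \<noteq> 0" "v$j = 0" "v \<noteq> 0"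
  shows "2 \<le> rank A"
proof -
  have uv: "u \<noteq> v" using assms by auto
  have "u \<notin> span {v}"
  proof
    assume "u \<in> span {v}"
    then obtain c where "u = c *\<^sub>R v" by (auto simp: span_singleton)
    hence "u$j = 0" using assms by simp
    thus False using assms by simp
  qed
  hence ind: "independent {u, v}"
    using assms uv by (simp add: independent_insert)
  have "{u, v} \<subseteq> rows A" using assms by (auto simp: rows_eq)
  hence "card {u, v} \<le> dim (rows A)" using ind by (rule independent_card_le_dim)
  thus ?thesis using uv by (simp add: row_rank_def)
qed

lemma rank_le1:
  fixes A :: "real^'n^'m"
  assumes "\<forall>i. A$i = u"
  shows "rank A \<le> 1"
proof -
  have "rows A \<subseteq> span {u}" using assms by (auto simp: rows_eq span_base)
  hence "dim (rows A) \<le> card {u}" by (intro dim_le_card) auto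
  thus ?thesis by (simp add: row_rank_def)
qed

theorem proposition6:
  fixes D :: "real^'n^'m" and j :: 'n
  assumes "CARD('m) \<ge> 2" and "CARD('n) \<ge> 2"
    and "D \<in> det_channels"
    and "card {i. D $ i $ j \<noteq> 0} \<le> CARD('m) - 2"
  shows "\<not> I_maximized {D, Uch j}"
proof
  assume "I_maximized {D, Uch j}"
  then obtain lam where pd: "prob_dist_det lam" and supp: "{X. lam X \<noteq> 0} = {D, Uch j}"
    and opt: "C11 lam = C11bar (mix lam)"
    unfolding I_maximized_def by blast
  define U :: "real^'n^'m" where "U = Uch j"
  define e :: "real^'n" where "e = (\<chi> k. if k = j then 1 else 0)"
  have Urow: "U$i = e" for i by (simp add: U_def Uch_def e_def)
  have ej: "e$j = 1" by (simp add: e_def)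
  have esum: "(\<Sum>k\<in>UNIV. e$k) = 1" by (simp add: e_def)
  have lam0: "\<And>X. lam X \<ge> 0" and lamout: "\<And>X. X \<notin> det_channels \<Longrightarrow> lam X = 0"
    and lamsum: "(\<Sum>X\<in>det_channels. lam X) = 1"
    using pd unfolding prob_dist_det_def by auto
  have fin: "finite (det_channels :: (real^'n^'m) set)"
    using lamsum by (metis sum.infinite zero_neq_one)
  have lamD: "lam D \<noteq> 0" and lamU: "lam U \<noteq> 0" using supp by (auto simp: U_def)
  have Ud: "U \<in> det_channels" using lamU lamout by blast
  have Dd: "D \<in> det_channels" by fact
  have lamz: "\<And>X. X \<noteq> D \<Longrightarrow> X \<noteq> U \<Longrightarrow> lam X = 0" using supp by (auto simp: U_def)
  have Ddet: "\<And>i k. D$i$k \<ge> 0" "\<And>i. (\<Sum>k\<in>UNIV. D$i$k) = 1" "\<And>i k. D$i$k = 0 \<or> D$i$k = 1"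
    using Dd by (auto simp: det_channels_def channel_def)
  have cardc: "card {i. D$i$j \<noteq> 0} + card {i. D$i$j = 0} = CARD('m)"
  proof -
    have "{i. D$i$j = 0} = UNIV - {i. D$i$j \<noteq> 0}" by auto
    thus ?thesis by (simp add: card_Diff_subset) (metis card_mono finite subset_UNIV le_add_diff_inverse)
  qed
  have "2 \<le> card {i. D$i$j = 0}" using cardc assms(1,4) by linarith
  then obtain i1 i2 where i12: "D$i1$j = 0" "D$i2$j = 0" "i1 \<noteq> i2"
  proof -
    assume r: "\<And>i1 i2. D$i1$j = 0 \<Longrightarrow> D$i2$j = 0 \<Longrightarrow> i1 \<noteq> i2 \<Longrightarrow> thesis"
    assume "2 \<le> card {i. D$i$j = 0}"
    then obtain S where "S \<subseteq> {i. D$i$j = 0}" "card S = 2"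
      by (meson obtain_subset_with_card_n)
    then show thesis using r by (auto simp: card_2_iff)
  qed
  have rownz: "D$i \<noteq> 0" for i
  proof
    assume "D$i = 0"
    hence "(\<Sum>k\<in>UNIV. D$i$k) = 0" by simp
    thus False using Ddet(2)[of i] by simp
  qed
  have DneU: "D \<noteq> U"
  proof
    assume "D = U"
    hence "D$i1$j = 1" by (simp add: Urow ej)
    thus False using i12 by simp
  qed
  define D' :: "real^'n^'m" where "D' = (\<chi> i. if i = i1 then e else D$i)"
  define E :: "real^'n^'m" where "E = (\<chi> i. if i = i1 then D$i1 else e)"
  have D'row: "D'$i = (if i = i1 then e else D$i)" for i by (simp add: D'_def)
  have Erow: "E$i = (if i = i1 then D$i1 else e)" for i by (simp add: E_def)
  have e01: "e$k = 0 \<or> e$k = 1" for k by (simp add: e_def)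
  have D'd: "D' \<in> det_channels"
    unfolding det_channels_def channel_def mem_Collect_eq
    using Ddet esum e01 by (auto simp: D'row e_def)
  have Ed: "E \<in> det_channels"
    unfolding det_channels_def channel_def mem_Collect_eq
    using Ddet esum e01 by (auto simp: Erow e_def)
  have n1: "D' \<noteq> D" using i12 ej by (metis D'row zero_neq_one)
  have n2: "D' \<noteq> E" using i12 ej i12(3) by (metis D'row Erow zero_neq_one)
  have n3: "D' \<noteq> U" using i12 ej by (metis D'row Urow zero_neq_one)
  have n4: "E \<noteq> D" using i12 ej by (metis Erow zero_neq_one)
  have n5: "E \<noteq> U" using i12 ej by (metis Erow Urow zero_neq_one)
  define p where "p = lam D"
  have sum2: "(\<Sum>X\<in>det_channels. g X) = g D + g U" if "\<And>X. X \<noteq> D \<Longrightarrow> X \<noteq> U \<Longrightarrow> g X = 0" for g :: "real^'n^'m \<Rightarrow> 'b::comm_monoid_add"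
  proof -
    have "(\<Sum>X\<in>det_channels. g X) = (\<Sum>X\<in>{D,U}. g X)"
      using fin Dd Ud that by (intro sum.mono_neutral_right) auto
    thus ?thesis using DneU by simp
  qed
  have lamU': "lam U = 1 - p" using sum2[of lam] lamz lamsum by (simp add: p_def)
  have p0: "p > 0" using lam0[of D] lamD by (simp add: p_def)
  have p1: "1 - p > 0" using lam0[of U] lamU lamU' by simp
  define q where "q = min p (1 - p)"
  have q0: "q > 0" using p0 p1 by (simp add: q_def)
  define lam' where "lam' = (\<lambda>X. if X = D' then q else if X = E then q else if X = D then p - q else if X = U then 1 - p - q else 0)"
  have sum4: "(\<Sum>X\<in>det_channels. g X) = g D' + g E + g D + g U" if "\<And>X. X \<noteq> D \<Longrightarrow> X \<noteq> U \<Longrightarrow> X \<noteq> D' \<Longrightarrow> X \<noteq> E \<Longrightarrow> g X = 0" for g :: "real^'n^'m \<Rightarrow> 'b::comm_monoid_add"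
  proof -
    have "(\<Sum>X\<in>det_channels. g X) = (\<Sum>X\<in>{D',E,D,U}. g X)"
      using fin Dd Ud D'd Ed that by (intro sum.mono_neutral_right) auto
    thus ?thesis using DneU n1 n2 n3 n4 n5 by (simp add: add.assoc)
  qed
  have lv: "lam' D' = q" "lam' E = q" "lam' D = p - q" "lam' U = 1 - p - q"
    using DneU n1 n2 n3 n4 n5 by (auto simp: lam'_def)
  have lz: "\<And>X. X \<noteq> D \<Longrightarrow> X \<noteq> U \<Longrightarrow> X \<noteq> D' \<Longrightarrow> X \<noteq> E \<Longrightarrow> lam' X = 0"
    by (auto simp: lam'_def)
  have pd': "prob_dist_det lam'"
    unfolding prob_dist_det_def
  proof (intro conjI allI impI)
    fix X show "lam' X \<ge> 0" using q0 by (auto simp: lam'_def q_def)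
  next
    fix X :: "real^'n^'m" assume "X \<notin> det_channels"
    thus "lam' X = 0" using Dd Ud D'd Ed by (auto simp: lam'_def)
  next
    show "(\<Sum>X\<in>det_channels. lam' X) = 1" using sum4[of lam'] lz lv by simp
  qed
  have sumDE: "D' + E = D + U"
    by (simp add: vec_eq_iff D'row Erow Urow)
  have mixeq: "mix lam' = mix lam"
  proof -
    have "mix lam' = q *\<^sub>R D' + q *\<^sub>R E + (p - q) *\<^sub>R D + (1 - p - q) *\<^sub>R U"
      unfolding mix_def using sum4[of "\<lambda>X. lam' X *\<^sub>R X"] lz lv by simp
    also have "\<dots> = q *\<^sub>R (D' + E) + (p - q) *\<^sub>R D + (1 - p - q) *\<^sub>R U"
      by (simp add: scaleR_right_distrib)
    also have "\<dots> = p *\<^sub>R D + (1 - p) *\<^sub>R U"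
      unfolding sumDE by (simp add: algebra_simps)
    also have "\<dots> = mix lam"
      unfolding mix_def using sum2[of "\<lambda>X. lam X *\<^sub>R X"] lamz lamU' by (simp add: p_def)
    finally show ?thesis .
  qed
  define rD where "rD = real (rank D)"
  define rD' where "rD' = real (rank D')"
  define rE where "rE = real (rank E)"
  define rU where "rU = real (rank U)"
  have C1: "C11 lam = p * log 2 rD + (1 - p) * log 2 rU"
    unfolding C11_def rD_def rU_def
    using sum2[of "\<lambda>X. lam X * log 2 (real (rank X))"] lamz lamU' by (simp add: p_def)
  have C2: "C11 lam' = q * log 2 rD' + q * log 2 rE + (p - q) * log 2 rD + (1 - p - q) * log 2 rU"
    unfolding C11_def rD_def rU_def rD'_def rE_def
    using sum4[of "\<lambda>X. lam' X * log 2 (real (rank X))"] lz lv by simp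
  have rD'2: "rD' \<ge> 2" unfolding rD'_def
    using rank_ge2[of D' i1 e i2 "D$i2" j] D'row i12 ej rownz by simp
  have rE2: "rE \<ge> 2" unfolding rE_def
    using rank_ge2[of E i2 e i1 "D$i1" j] Erow i12 ej rownz by simp
  have rDle: "rD \<le> rD' + 1" unfolding rD_def rD'_def
    using rank_row_change[of i1 D D'] D'row by simp
  have rUle: "rU \<le> 1" unfolding rU_def using rank_le1[of U e] Urow by simp
  have rU0: "rU \<ge> 0" unfolding rU_def by simp
  have logU: "log 2 rU \<le> 0"
  proof (cases "rU = 0")
    case True thus ?thesis by (simp add: log_def)
  next
    case False thus ?thesis using rUle rU0 by (simp add: log_le_zero_cancel_iff)
  qed
  have l1: "log 2 rD' \<ge> 1" "log 2 rE \<ge> 1" using rD'2 rE2 by simp_all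
  have logD: "log 2 rD < log 2 rD' + log 2 rE"
  proof (cases "rD = 0")
    case True
    hence "log 2 rD = 0" by (simp add: log_def)
    thus ?thesis using l1 by linarith
  next
    case False
    hence "rD > 0" unfolding rD_def by simp
    moreover have "rD < rD' * rE"
    proof -
      have "rD' * 2 \<le> rD' * rE" using rD'2 rE2 by (intro mult_left_mono) auto
      thus ?thesis using rDle rD'2 by linarith
    qed
    ultimately have "log 2 rD < log 2 (rD' * rE)" by simp
    thus ?thesis using rD'2 rE2 by (simp add: log_mult)
  qed
  have lt: "C11 lam < C11 lam'"
  proof -
    have "C11 lam' - C11 lam = q * (log 2 rD' + log 2 rE - log 2 rD - log 2 rU)"
      unfolding C1 C2 by (simp add: algebra_simps)
    moreover have "q * (log 2 rD' + log 2 rE - log 2 rD - log 2 rU) > 0"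
      using q0 logD logU by (intro mult_pos_pos) auto
    ultimately show ?thesis by simp
  qed
  have bdd: "bdd_above (C11 ` Lambda (mix lam))"
  proof (rule bdd_aboveI2)
    fix l assume "l \<in> Lambda (mix lam)"
    hence l0: "\<And>X. l X \<ge> 0" and ls: "(\<Sum>X\<in>det_channels. l X) = 1"
      by (auto simp: Lambda_def prob_dist_det_def)
    have l1: "l X \<le> 1" if "X \<in> det_channels" for X
      using member_le_sum[of X det_channels l] fin that l0 ls by simp
    show "C11 l \<le> (\<Sum>X\<in>(det_channels::(real^'n^'m) set). \<bar>log 2 (real (rank X))\<bar>)"
      unfolding C11_def
    proof (rule sum_mono)
      fix X :: "real^'n^'m" assume X: "X \<in> det_channels"
      have "l X * log 2 (real (rank X)) \<le> \<bar>l X * log 2 (real (rank X))\<bar>" by simp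
      also have "\<dots> = l X * \<bar>log 2 (real (rank X))\<bar>" using l0[of X] by (simp add: abs_mult)
      also have "\<dots> \<le> 1 * \<bar>log 2 (real (rank X))\<bar>" using l1[OF X] by (intro mult_right_mono) auto
      finally show "l X * log 2 (real (rank X)) \<le> \<bar>log 2 (real (rank X))\<bar>" by simp
    qed
  qed
  have "lam' \<in> Lambda (mix lam)" using pd' mixeq by (simp add: Lambda_def)
  hence "C11 lam' \<le> C11bar (mix lam)"
    unfolding C11bar_def using bdd by (rule cSUP_upper)
  thus False using opt lt by simp
qed

end
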